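(* Let $J$ be a finite-dimensional Jordan algebra over a field of characteristic different from $2$ such that every linear endomorphism of $J$ is a quasiderivation, i.e. $QDer(J)=End(J)$. Then either $J$ is a field or $J$ has zero multiplication.
   Context: A Jordan algebra is a commutative algebra satisfying $(x^2,y,x)=0$, where $(a,b,c)=(ab)c-a(bc)$. A linear map $f:J\to J$ is a quasiderivation if there exists a linear map $Q:J\to J$ with $Q(xy)=f(x)y+xf(y)$ for all $x,y\in J$; $QDer(J)$ is the set of quasiderivations and $End(J)$ the set of all linear endomorphisms of $J$. *)

theory Defs
  imports Complex_Main
begin

definition bilinear_mult :: "('k::field \<Rightarrow> 'v::ab_group_add \<Rightarrow> 'v) \<Rightarrow> ('v \<Rightarrow> 'v \<Rightarrow> 'v) \<Rightarrow> bool" where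
  "bilinear_mult sc mu \<longleftrightarrow>
     (\<forall>x. Vector_Spaces.linear sc sc (\<lambda>y. mu x y)) \<and>
     (\<forall>y. Vector_Spaces.linear sc sc (\<lambda>x. mu x y))"

definition jordan_algebra :: "('k::field \<Rightarrow> 'v::ab_group_add \<Rightarrow> 'v) \<Rightarrow> ('v \<Rightarrow> 'v \<Rightarrow> 'v) \<Rightarrow> bool" where
  "jordan_algebra sc mu \<longleftrightarrow>
     vector_space sc \<and> bilinear_mult sc mu \<and>
     (\<forall>x y. mu x y = mu y x) \<and>
     (\<forall>x y. mu (mu (mu x x) y) x = mu (mu x x) (mu y x))"

definition finite_dim :: "('k::field \<Rightarrow> 'v::ab_group_add \<Rightarrow> 'v) \<Rightarrow> bool" where
  "finite_dim sc \<longleftrightarrow> (\<exists>B. finite B \<and> module.span sc B = UNIV)"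

definition quasiderivation :: "('k::field \<Rightarrow> 'v::ab_group_add \<Rightarrow> 'v) \<Rightarrow> ('v \<Rightarrow> 'v \<Rightarrow> 'v) \<Rightarrow> ('v \<Rightarrow> 'v) \<Rightarrow> bool" where
  "quasiderivation sc mu f \<longleftrightarrow>
     Vector_Spaces.linear sc sc f \<and>
     (\<exists>Q. Vector_Spaces.linear sc sc Q \<and> (\<forall>x y. Q (mu x y) = mu (f x) y + mu x (f y)))"

definition is_field_alg :: "('v::ab_group_add \<Rightarrow> 'v \<Rightarrow> 'v) \<Rightarrow> bool" where
  "is_field_alg mu \<longleftrightarrow>
     (\<forall>x y z. mu (mu x y) z = mu x (mu y z)) \<and>
     (\<forall>x y. mu x y = mu y x) \<and>
     (\<exists>e. e \<noteq> 0 \<and> (\<forall>x. mu e x = x) \<and> (\<forall>x. x \<noteq> 0 \<longrightarrow> (\<exists>y. mu x y = e)))"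

definition zero_mult :: "('v::ab_group_add \<Rightarrow> 'v \<Rightarrow> 'v) \<Rightarrow> bool" where
  "zero_mult mu \<longleftrightarrow> (\<forall>x y. mu x y = 0)"

end

theory Submission
  imports Defs
begin

lemma vs_self: "vector_space ((*) :: 'k::field \<Rightarrow> 'k \<Rightarrow> 'k)"
  by unfold_locales (simp_all add: algebra_simps)

locale jctx = vector_space sc for sc :: "'k::field \<Rightarrow> 'v::ab_group_add \<Rightarrow> 'v" (infixr \<open>*s\<close> 75) +
  fixes mu :: "'v \<Rightarrow> 'v \<Rightarrow> 'v"
  assumes addR: "mu x (y + z) = mu x y + mu x z"
    and sclR: "mu x (c *s y) = c *s mu x y"
    and comm: "mu x y = mu y x"
    and jord: "mu (mu (mu x x) y) x = mu (mu x x) (mu y x)"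
    and qd: "Vector_Spaces.linear sc sc f \<Longrightarrow> \<exists>Q. Vector_Spaces.linear sc sc Q \<and> (\<forall>x y. Q (mu x y) = mu (f x) y + mu x (f y))"
    and two: "(2::'k) \<noteq> 0"
begin

lemma addL: "mu (y + z) x = mu y x + mu z x"
  using addR comm by metis
lemma sclL: "mu (c *s y) x = c *s mu y x"
  using sclR comm by metis
lemma mu0R[simp]: "mu x 0 = 0"
  using addR[of x 0 0] by simp
lemma mu0L[simp]: "mu 0 x = 0"
  using comm mu0R by metis
lemma diffR: "mu x (y - z) = mu x y - mu x z"
  using addR[of x "y - z" z] by (simp add: algebra_simps)

lemma extend_fun:
  assumes "independent B"
  shows "\<exists>\<phi>. Vector_Spaces.linear sc (*) \<phi> \<and> (\<forall>b\<in>B. \<phi> b = g b)"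
proof -
  interpret vp: vector_space_pair sc "(*) :: 'k \<Rightarrow> 'k \<Rightarrow> 'k"
    using vs_self by (simp add: vector_space_pair_def vector_space_axioms)
  show ?thesis using vp.linear_independent_extend[OF assms] by blast
qed

lemma lin_rank1:
  assumes "Vector_Spaces.linear sc (*) \<phi>"
  shows "Vector_Spaces.linear sc sc (\<lambda>v. \<phi> v *s w)"
proof -
  have vs: "vector_space ((*) :: 'k \<Rightarrow> 'k \<Rightarrow> 'k)" by (rule vs_self)
  have a: "\<phi> (x + y) = \<phi> x + \<phi> y" "\<phi> (c *s x) = c * \<phi> x" for x y c
    using assms unfolding Vector_Spaces.linear_iff by auto
  show ?thesis unfolding Vector_Spaces.linear_iff
    by (auto simp: a vector_space_axioms scale_left_distrib)
qed

lemma linQ: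
  assumes "Vector_Spaces.linear sc sc Q"
  shows "Q (x + y) = Q x + Q y" "Q (c *s x) = c *s Q x" "Q 0 = 0"
proof -
  show a: "Q (x + y) = Q x + Q y" "Q (c *s x) = c *s Q x" for x y c
    using assms unfolding Vector_Spaces.linear_iff by auto
  show "Q 0 = 0" using a(1)[of 0 0] by simp
qed

lemma Qval:
  assumes "Vector_Spaces.linear sc (*) \<phi>"
  shows "\<exists>Q. Vector_Spaces.linear sc sc Q \<and> (\<forall>x y. Q (mu x y) = mu w (\<phi> x *s y + \<phi> y *s x))"
proof -
  obtain Q where Q: "Vector_Spaces.linear sc sc Q" "\<forall>x y. Q (mu x y) = mu (\<phi> x *s w) y + mu x (\<phi> y *s w)"
    using qd[OF lin_rank1[OF assms, of w]] by blast
  have "mu (\<phi> x *s w) y + mu x (\<phi> y *s w) = mu w (\<phi> x *s y + \<phi> y *s x)" for x y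
    by (simp add: sclL sclR addR comm[of x w])
  with Q show ?thesis by auto
qed

lemma annihil:
  assumes "a \<noteq> 0" "\<forall>z. mu a z = 0"
  shows "mu x y = 0"
proof -
  obtain \<phi> where phi: "Vector_Spaces.linear sc (*) \<phi>" "\<phi> a = 1"
    using extend_fun[of "{a}" "\<lambda>_. 1"] assms(1) by auto
  obtain Q where Q: "Vector_Spaces.linear sc sc Q" "\<forall>u v. Q (mu u v) = mu x (\<phi> u *s v + \<phi> v *s u)"
    using Qval[OF phi(1), of x] by blast
  have "Q (mu a y) = 0" using assms(2) linQ[OF Q(1)] by simp
  then have "mu x (y + \<phi> y *s a) = 0" using Q(2) phi(2) by simp
  then have "mu x y + \<phi> y *s mu a x = 0" by (simp add: addR sclR comm[of x a])
  then show ?thesis using assms(2) by simp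
qed

definition T :: "('v \<Rightarrow> 'k) \<Rightarrow> 'v \<Rightarrow> 'v \<Rightarrow> 'v" where
  "T \<phi> x y = \<phi> x *s y + \<phi> y *s x"

context
  assumes nz: "\<not> (\<forall>x y. mu x y = 0)"
begin

lemma ann0: "(\<forall>z. mu d z = 0) \<Longrightarrow> d = 0"
  using annihil nz by blast

lemma rel:
  assumes phi: "Vector_Spaces.linear sc (*) \<phi>"
    and eq: "mu x y = \<alpha> *s mu u v + \<beta> *s mu r s"
  shows "T \<phi> x y = \<alpha> *s T \<phi> u v + \<beta> *s T \<phi> r s"
proof -
  let ?d = "T \<phi> x y - (\<alpha> *s T \<phi> u v + \<beta> *s T \<phi> r s)"
  have "mu ?d w = 0" for w
  proof -
    obtain Q where Q: "Vector_Spaces.linear sc sc Q" "\<forall>x y. Q (mu x y) = mu w (\<phi> x *s y + \<phi> y *s x)"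
      using Qval[OF phi, of w] by blast
    have "Q (mu x y) = \<alpha> *s Q (mu u v) + \<beta> *s Q (mu r s)"
      using eq linQ[OF Q(1)] by simp
    then have "mu w (T \<phi> x y) = \<alpha> *s mu w (T \<phi> u v) + \<beta> *s mu w (T \<phi> r s)"
      using Q(2) unfolding T_def by simp
    then have "mu w ?d = 0" by (simp add: diffR addR sclR)
    then show ?thesis by (simp add: comm)
  qed
  then have "?d = 0" using ann0 by blast
  then show ?thesis by simp
qed

lemma dom: assumes "mu x y = 0" "x \<noteq> 0" shows "y = 0"
proof -
  obtain \<phi> where phi: "Vector_Spaces.linear sc (*) \<phi>" "\<phi> x = 1"
    using extend_fun[of "{x}" "\<lambda>_. 1"] assms(2) by auto
  have "T \<phi> x y = 0 *s T \<phi> x y + 0 *s T \<phi> x y"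
    by (rule rel[OF phi(1)]) (simp add: assms(1))
  then have e1: "y + \<phi> y *s x = 0" using phi(2) by (simp add: T_def)
  then have ey: "y = (- \<phi> y) *s x" by (simp add: eq_neg_iff_add_eq_0 add.commute)
  have "\<phi> y = - \<phi> y * \<phi> x" using phi(1) ey
    by (metis Vector_Spaces.linear_iff)
  then have "\<phi> y + \<phi> y = 0" using phi(2) by simp
  then have "2 * \<phi> y = 0" by simp
  then have "\<phi> y = 0" using two by simp
  then show ?thesis using ey by simp
qed

lemma indep2:
  assumes "x \<noteq> 0" "\<not> (\<exists>c. y = c *s x)"
  shows "independent {y, x}"
proof (rule independent_insertI)
  show "y \<notin> span {x}" using assms(2) by (auto simp: span_singleton)
  show "independent {x}" using assms(1) by simp
qed

lemma sq: assumes "x \<noteq> 0" shows "\<exists>c. mu x x = c *s x"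
proof (rule ccontr)
  assume nc: "\<not> (\<exists>c. mu x x = c *s x)"
  let ?x2 = "mu x x" and ?x3 = "mu (mu x x) x"
  have ne: "?x2 \<noteq> x" using nc by (metis scale_one)
  have ind: "independent {?x2, x}" by (rule indep2[OF assms nc])
  have J: "mu ?x3 x = 1 *s mu ?x2 ?x2 + 0 *s mu ?x2 ?x2"
    using jord[of x x] by simp
  obtain \<phi>1 where p1: "Vector_Spaces.linear sc (*) \<phi>1" "\<phi>1 x = 1" "\<phi>1 ?x2 = 0"
    using extend_fun[OF ind, of "\<lambda>v. if v = x then 1 else 0"] ne by auto
  obtain \<phi>2 where p2: "Vector_Spaces.linear sc (*) \<phi>2" "\<phi>2 x = 0" "\<phi>2 ?x2 = 1"
    using extend_fun[OF ind, of "\<lambda>v. if v = x then 0 else 1"] ne by auto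
  have "T \<phi>1 ?x3 x = 1 *s T \<phi>1 ?x2 ?x2 + 0 *s T \<phi>1 ?x2 ?x2"
    by (rule rel[OF p1(1) J])
  then have "\<phi>1 ?x3 *s x + ?x3 = 0" using p1 by (simp add: T_def)
  then have e3: "?x3 = (- \<phi>1 ?x3) *s x" by (simp add: eq_neg_iff_add_eq_0 add.commute)
  have "\<phi>2 ?x3 = (- \<phi>1 ?x3) * \<phi>2 x" using p2(1) e3
    by (metis Vector_Spaces.linear_iff)
  then have z: "\<phi>2 ?x3 = 0" using p2 by simp
  have "T \<phi>2 ?x3 x = 1 *s T \<phi>2 ?x2 ?x2 + 0 *s T \<phi>2 ?x2 ?x2"
    by (rule rel[OF p2(1) J])
  then have "0 = ?x2 + ?x2" using p2 z by (simp add: T_def)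
  then have "(2::'k) *s ?x2 = 0" by (metis one_add_one scale_left_distrib scale_one)
  then have "?x2 = 0" using two by simp
  then have "x = 0" using dom[of x x] assms by blast
  with assms show False by simp
qed

lemma sq_nz: assumes "x \<noteq> 0" "mu x x = c *s x" shows "c \<noteq> 0"
  using assms dom[of x x] by auto

lemma dim1:
  assumes ee: "mu e e = e" and e0: "e \<noteq> 0"
  shows "\<exists>c. y = c *s e"
proof (rule ccontr)
  assume nc: "\<not> (\<exists>c. y = c *s e)"
  have y0: "y \<noteq> 0" using nc by (metis scale_zero_left)
  obtain m where yy: "mu y y = m *s y" using sq[OF y0] by blast
  have m0: "m \<noteq> 0" using sq_nz[OF y0 yy] .
  have ey0: "e + y \<noteq> 0" using nc
    by (metis add_eq_0_iff scale_minus_left scale_one)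
  obtain \<nu> where nu: "mu (e+y) (e+y) = \<nu> *s (e + y)" using sq[OF ey0] by blast
  have "mu (e+y) (e+y) = e + (mu e y + mu e y) + m *s y"
    by (simp add: addL addR ee yy comm[of y e] algebra_simps)
  then have "mu e y + mu e y = \<nu> *s e + \<nu> *s y - e - m *s y"
    using nu by (simp add: scale_right_distrib algebra_simps)
  then have "2 *s mu e y = (\<nu> - 1) *s e + (\<nu> - m) *s y"
    by (metis (no_types, lifting) add_diff_eq diff_diff_eq2 one_add_one scale_left_diff_distrib
        scale_left_distrib scale_one diff_add_eq)
  then have "mu e y = (inverse 2 * (\<nu> - 1)) *s e + (inverse 2 * (\<nu> - m)) *s y"
    using two by (metis (no_types, lifting) scale_right_distrib scale_scale left_inverse scale_one)
  also have "\<dots> = (inverse 2 * (\<nu> - 1)) *s mu e e + (inverse 2 * (\<nu> - m) * inverse m) *s mu y y"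
    using m0 by (simp add: ee yy field_simps)
  finally have R: "mu e y = (inverse 2 * (\<nu> - 1)) *s mu e e + (inverse 2 * (\<nu> - m) * inverse m) *s mu y y" .
  have ind: "independent {y, e}" by (rule indep2[OF e0 nc])
  have ne: "y \<noteq> e" using nc by (metis scale_one)
  obtain \<phi> where p: "Vector_Spaces.linear sc (*) \<phi>" "\<phi> e = 1" "\<phi> y = 0"
    using extend_fun[OF ind, of "\<lambda>v. if v = e then 1 else 0"] ne by auto
  have "T \<phi> e y = (inverse 2 * (\<nu> - 1)) *s T \<phi> e e + (inverse 2 * (\<nu> - m) * inverse m) *s T \<phi> y y"
    by (rule rel[OF p(1) R])
  then have "y = (inverse 2 * (\<nu> - 1)) *s (e + e)" using p by (simp add: T_def)
  then have "y = (inverse 2 * (\<nu> - 1) * 2) *s e"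
    by (metis one_add_one scale_left_distrib scale_one scale_scale)
  with nc show False by blast
qed

lemma field: "is_field_alg mu"
proof -
  obtain x0 y0 where "mu x0 y0 \<noteq> 0" using nz by blast
  then have x0: "x0 \<noteq> 0" by auto
  obtain c where c: "mu x0 x0 = c *s x0" using sq[OF x0] by blast
  have c0: "c \<noteq> 0" using sq_nz[OF x0 c] .
  define e where "e = inverse c *s x0"
  have ee: "mu e e = e" unfolding e_def using c0
    by (simp add: sclL sclR c)
  have e0: "e \<noteq> 0" unfolding e_def using c0 x0 by simp
  have mm: "mu (a *s e) (b *s e) = (a * b) *s e" for a b
    by (simp add: sclL sclR ee mult.commute)
  have all: "\<forall>v. \<exists>a. v = a *s e" using dim1[OF ee e0] by blast
  show ?thesis unfolding is_field_alg_def
  proof (intro conjI allI)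
    fix x y z :: 'v
    obtain a b d where "x = a *s e" "y = b *s e" "z = d *s e" using all by metis
    then show "mu (mu x y) z = mu x (mu y z)" by (simp add: mm mult.assoc)
  next
    fix x y :: 'v show "mu x y = mu y x" by (rule comm)
  next
    show "\<exists>e. e \<noteq> 0 \<and> (\<forall>x. mu e x = x) \<and> (\<forall>x. x \<noteq> 0 \<longrightarrow> (\<exists>y. mu x y = e))"
    proof (rule exI[of _ e], intro conjI allI impI)
      show "e \<noteq> 0" by (rule e0)
    next
      fix x :: 'v obtain a where a: "x = a *s e" using all by blast
      show "mu e x = x" using mm[of 1 a] a by simp
    next
      fix x :: 'v assume x: "x \<noteq> 0"
      obtain a where a: "x = a *s e" using all by blast
      then have "a \<noteq> 0" using x by auto
      then have "mu x (inverse a *s e) = e" using mm[of a "inverse a"] a by simp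
      then show "\<exists>y. mu x y = e" by blast
    qed
  qed
qed

end

end

lemma jmain:
  fixes sc :: "'k::field \<Rightarrow> 'v::ab_group_add \<Rightarrow> 'v"
    and mu :: "'v \<Rightarrow> 'v \<Rightarrow> 'v"
  assumes "(2::'k) \<noteq> 0"
    and "jordan_algebra sc mu"
    and "\<forall>f. Vector_Spaces.linear sc sc f \<longrightarrow> quasiderivation sc mu f"
  shows "is_field_alg mu \<or> zero_mult mu"
proof -
  from assms(2) have vs: "vector_space sc" and bl: "bilinear_mult sc mu"
    and cm: "\<forall>x y. mu x y = mu y x" and jd: "\<forall>x y. mu (mu (mu x x) y) x = mu (mu x x) (mu y x)"
    unfolding jordan_algebra_def by auto
  interpret jctx sc mu
  proof (unfold_locales)
    fix x y z show "mu x (y + z) = mu x y + mu x z"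
      using bl unfolding bilinear_mult_def Vector_Spaces.linear_iff by blast
  next
    fix x c y show "mu x (sc c y) = sc c (mu x y)"
      using bl unfolding bilinear_mult_def Vector_Spaces.linear_iff by blast
  next
    fix x y show "mu x y = mu y x" using cm by blast
  next
    fix x y show "mu (mu (mu x x) y) x = mu (mu x x) (mu y x)" using jd by blast
  next
    fix f assume "Vector_Spaces.linear sc sc f"
    then show "\<exists>Q. Vector_Spaces.linear sc sc Q \<and> (\<forall>x y. Q (mu x y) = mu (f x) y + mu x (f y))"
      using assms(3) unfolding quasiderivation_def by blast
  next
    show "(2::'k) \<noteq> 0" by (rule assms(1))
  qed (use vs in \<open>auto simp: vector_space_def\<close>)+
  show ?thesis using field unfolding zero_mult_def by blast
qed

theorem mainTheorem12:
  fixes sc :: "'k::field \<Rightarrow> 'v::ab_group_add \<Rightarrow> 'v"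
    and mu :: "'v \<Rightarrow> 'v \<Rightarrow> 'v"
  assumes "(2::'k) \<noteq> 0"
    and "jordan_algebra sc mu"
    and "finite_dim sc"
    and "\<forall>f. Vector_Spaces.linear sc sc f \<longrightarrow> quasiderivation sc mu f"
  shows "is_field_alg mu \<or> zero_mult mu"
  using jmain[OF assms(1,2,4)] .

end
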